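(* For integers $1\le k\le n$ let $p_k(n)$ be the number of partitions of $n$ into exactly $k$ parts, and let $F_n(x)=\sum_{k=1}^n p_k(n)x^k$. Then the arguments of the zeros of $\{F_n(x)\}$ are uniformly distributed on the unit circle as $n\to\infty$; that is, the measures $\frac{1}{\deg F_n}\sum_{z\in\mathcal{Z}(F_n)}\delta_{\arg z}$ converge in the weak$^*$-topology to normalized Lebesgue measure on the unit circle.
   Context: $\mathcal{Z}(q)$ denotes the set of zeros of the polynomial $q$ (counted with multiplicity); the sum is taken over the zeros for which the argument is defined. *)

theory Defs
  imports "HOL-Analysis.Analysis" "HOL-Library.Multiset" "HOL-Computational_Algebra.Polynomial"
begin

definition part_count :: "nat \<Rightarrow> nat \<Rightarrow> nat" where
  "part_count k n = card {M :: nat multiset. size M = k \<and> (\<forall>x\<in>#M. 0 < x) \<and> sum_mset M = n}"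

definition Fpoly :: "nat \<Rightarrow> complex poly" where
  "Fpoly n = (\<Sum>k=1..n. monom (of_nat (part_count k n)) k)"

text \<open>Integral of a test function against the zero-argument counting measure
  (1/deg F) * sum over nonzero zeros z (with multiplicity) of delta_{arg z}.\<close>
definition zero_arg_avg :: "complex poly \<Rightarrow> (complex \<Rightarrow> real) \<Rightarrow> real" where
  "zero_arg_avg q f = (1 / real (degree q)) *
     (\<Sum>z\<in>{z. poly q z = 0 \<and> z \<noteq> 0}. real (order z q) * f (cis (Arg z)))"

end

theory Submission
  imports Defs "HOL-Complex_Analysis.Complex_Analysis" "HOL-Computational_Algebra.Fundamental_Theorem_Algebra" "HOL-Real_Asymp.Real_Asymp"
begin


definition parts :: "nat \<Rightarrow> nat multiset set" where
  "parts n = {M. (\<forall>x\<in>#M. 0 < x) \<and> sum_mset M = n}"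

lemma card_sq_le_sum:
  assumes "finite S" "\<forall>x\<in>S. 0 < x"
  shows "(card S)^2 \<le> 4 * \<Sum> S"
proof -
  define k where "k = card S"
  define t where "t = k div 2"
  define B where "B = {x\<in>S. x \<le> t}"
  define C where "C = S - B"
  have "B \<subseteq> {1..t}" using assms(2) by (auto simp: B_def)
  hence cB: "card B \<le> t" by (metis card_atLeastAtMost card_mono finite_atLeastAtMost diff_Suc_1)
  have fB: "finite B" using assms(1) by (simp add: B_def)
  have "card C = k - card B" unfolding C_def k_def
    by (rule card_Diff_subset[OF fB]) (auto simp: B_def)
  hence cC: "card C \<ge> k - t" using cB by simp
  have "(t+1) * card C = (\<Sum>x\<in>C. t+1)" by simp
  also have "\<dots> \<le> \<Sum> C" by (rule sum_mono) (auto simp: C_def B_def)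
  also have "\<dots> \<le> \<Sum> S" by (rule sum_mono2[OF assms(1)]) (auto simp: C_def)
  finally have 1: "(t+1) * (k - t) \<le> \<Sum> S" using cC
    by (meson le_trans mult_le_mono2)
  have "k^2 \<le> 4 * ((t+1) * (k - t))"
  proof (cases "even k")
    case True
    then obtain j where "k = 2*j" by auto
    thus ?thesis by (simp add: t_def power2_eq_square algebra_simps)
  next
    case False
    then obtain j where "k = 2*j+1" using oddE by blast
    thus ?thesis by (simp add: t_def power2_eq_square algebra_simps)
  qed
  with 1 show ?thesis unfolding k_def by linarith
qed

lemma cnt_le: "count M x * x \<le> sum_mset (M::nat multiset)"
proof -
  have "replicate_mset (count M x) x \<subseteq># M" by (simp add: subseteq_mset_def count_replicate_mset)
  then have e: "M = replicate_mset (count M x) x + (M - replicate_mset (count M x) x)" by simp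
  have "sum_mset M = count M x * x + sum_mset (M - replicate_mset (count M x) x)"
    by (subst e) (simp only: sum_mset.union sum_mset_replicate_mset of_nat_id)
  thus ?thesis by simp
qed
lemma mem_le_sum: "x \<in># M \<Longrightarrow> x \<le> sum_mset (M::nat multiset)"
proof -
  assume "x \<in># M"
  hence "1 \<le> count M x" by (simp add: Suc_le_eq)
  hence "x \<le> count M x * x" by simp
  thus ?thesis using cnt_le[of M x] by linarith
qed

definition pairs_of :: "nat multiset \<Rightarrow> (nat \<times> nat) set" where
  "pairs_of M = (\<lambda>x. (x, count M x)) ` set_mset M"

lemma inj_pairs_of: "inj pairs_of"
proof (rule injI)
  fix M M' assume eq: "pairs_of M = pairs_of M'"
  show "M = M'"
  proof (rule multiset_eqI)
    fix x
    show "count M x = count M' x"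
    proof (cases "x \<in># M")
      case True
      hence "(x, count M x) \<in> pairs_of M'" using eq by (auto simp: pairs_of_def)
      thus ?thesis by (auto simp: pairs_of_def)
    next
      case False
      have "x \<notin># M'"
      proof
        assume "x \<in># M'"
        hence "(x, count M' x) \<in> pairs_of M" using eq by (auto simp: pairs_of_def)
        thus False using False by (auto simp: pairs_of_def)
      qed
      thus ?thesis using False by (simp add: not_in_iff)
    qed
  qed
qed

lemma sum_set_mset_le: "\<Sum>(set_mset M) \<le> sum_mset (M :: nat multiset)"
proof (induction M)
  case empty then show ?case by simp
next
  case (add x M)
  show ?case
  proof (cases "x \<in># M")
    case True
    then show ?thesis using add by (simp add: insert_absorb)
  next
    case False
    then show ?thesis using add by simp
  qed
qed

lemma pairs_of_parts:
  assumes "M \<in> parts n"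
  shows "pairs_of M \<subseteq> {1..n} \<times> {1..n}" "(card (pairs_of M))^2 \<le> 4 * n"
proof -
  have pos: "\<forall>x\<in>set_mset M. 0 < x" and s: "sum_mset M = n" using assms by (auto simp: parts_def)
  have le: "x \<le> n" if "x \<in># M" for x using s that mem_le_sum by blast
  have cle: "count M x \<le> n" if "x \<in># M" for x
  proof -
    have "count M x * x \<le> sum_mset M" by (rule cnt_le)
    moreover have "x \<ge> 1" using pos that by auto
    ultimately show ?thesis using s by (metis le_trans mult_le_mono2 nat_mult_1_right)
  qed
  show "pairs_of M \<subseteq> {1..n} \<times> {1..n}"
    using pos le cle by (auto simp: pairs_of_def Suc_le_eq)
  have "card (pairs_of M) = card (set_mset M)"
    unfolding pairs_of_def by (rule card_image) (auto simp: inj_on_def)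
  moreover have "(card (set_mset M))^2 \<le> 4 * n"
    using card_sq_le_sum[of "set_mset M"] pos sum_set_mset_le[of M] s by auto
  ultimately show "(card (pairs_of M))^2 \<le> 4 * n" by simp
qed

lemma card_small_subsets:
  assumes "finite S" "card S = c" "c \<ge> 1"
  shows "card {A. A \<subseteq> S \<and> card A \<le> d} \<le> (d+1) * c^d"
proof -
  have eq: "{A. A \<subseteq> S \<and> card A \<le> d} = (\<Union>j\<in>{..d}. {A. A \<subseteq> S \<and> card A = j})" by auto
  have "card {A. A \<subseteq> S \<and> card A \<le> d} \<le> (\<Sum>j\<in>{..d}. card {A. A \<subseteq> S \<and> card A = j})"
    unfolding eq by (rule card_UN_le) simp
  also have "\<dots> = (\<Sum>j\<in>{..d}. c choose j)" using n_subsets[OF assms(1)] assms(2) by simp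
  also have "\<dots> \<le> (\<Sum>j\<in>{..d}. c^d)"
  proof (rule sum_mono)
    fix j assume "j \<in> {..d}"
    hence jd: "j \<le> d" by simp
    show "c choose j \<le> c^d"
    proof (cases "j \<le> c")
      case True
      hence "c choose j \<le> c^j" by (rule binomial_le_pow)
      also have "\<dots> \<le> c^d" using jd assms(3) by (simp add: power_increasing)
      finally show ?thesis .
    next
      case False thus ?thesis by (simp add: binomial_eq_0)
    qed
  qed
  also have "\<dots> = (d+1) * c^d" by simp
  finally show ?thesis .
qed

lemma finite_parts: "finite (parts n)"
proof -
  have "pairs_of ` parts n \<subseteq> Pow ({1..n} \<times> {1..n})" using pairs_of_parts(1) by blast
  hence "finite (pairs_of ` parts n)" by (rule finite_subset) simp
  thus ?thesis using inj_pairs_of by (metis finite_imageD inj_on_subset subset_UNIV)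
qed

lemma card_parts_bound:
  assumes "n \<ge> 1"
  shows "real (card (parts n)) \<le> (2 * sqrt n + 1) * (real n ^ 2) powr (2 * sqrt n)"
proof -
  define d where "d = nat \<lfloor>2 * sqrt n\<rfloor>"
  have dle: "real d \<le> 2 * sqrt n" unfolding d_def by simp
  have sub: "pairs_of ` parts n \<subseteq> {A. A \<subseteq> {1..n} \<times> {1..n} \<and> card A \<le> d}"
  proof (rule subsetI)
    fix A assume "A \<in> pairs_of ` parts n"
    then obtain M where M: "M \<in> parts n" and A: "A = pairs_of M" by blast
    have "real (card (pairs_of M))^2 \<le> 4 * real n" using pairs_of_parts(2)[OF M] by (metis of_nat_le_iff of_nat_mult of_nat_power of_nat_numeral)
    hence "real (card (pairs_of M)) \<le> sqrt (4 * real n)" by (simp add: real_le_rsqrt)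
    also have "sqrt (4 * real n) = 2 * sqrt n" by (simp add: real_sqrt_mult)
    finally have "real (card (pairs_of M)) \<le> 2 * sqrt n" .
    hence "card (pairs_of M) \<le> d" unfolding d_def by (simp add: le_nat_floor)
    thus "A \<in> {A. A \<subseteq> {1..n} \<times> {1..n} \<and> card A \<le> d}" using pairs_of_parts(1)[OF M] A by blast
  qed
  have "card (parts n) = card (pairs_of ` parts n)"
    by (rule card_image[symmetric]) (meson inj_pairs_of inj_on_subset subset_UNIV)
  also have "\<dots> \<le> card {A. A \<subseteq> {1..n} \<times> {1..n} \<and> card A \<le> d}"
    by (rule card_mono[OF _ sub]) simp
  also have "\<dots> \<le> (d+1) * (n^2)^d"
    by (rule card_small_subsets) (use assms in \<open>auto simp: power2_eq_square\<close>)
  finally have "real (card (parts n)) \<le> real ((d+1) * (n^2)^d)" by (simp only: of_nat_le_iff)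
  also have "\<dots> = (real d + 1) * (real n ^ 2) powr (real d)"
    using assms by (simp add: powr_realpow algebra_simps)
  also have "\<dots> \<le> (2 * sqrt n + 1) * (real n ^ 2) powr (2 * sqrt n)"
  proof (rule mult_mono)
    show "(real n ^ 2) powr (real d) \<le> (real n ^ 2) powr (2 * sqrt n)"
      using assms dle by (intro powr_mono) auto
  qed (use dle in auto)
  finally show ?thesis .
qed

lemma part_count_le: "part_count k n \<le> card (parts n)"
  unfolding part_count_def by (rule card_mono[OF finite_parts]) (auto simp: parts_def)

lemma parts_ne: "n \<ge> 1 \<Longrightarrow> card (parts n) \<ge> 1"
proof -
  assume "n \<ge> 1"
  hence "{#n#} \<in> parts n" by (auto simp: parts_def)
  hence "parts n \<noteq> {}" by blast
  thus ?thesis using finite_parts[of n] by (simp add: Suc_le_eq card_gt_0_iff)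
qed

definition Kn :: "nat \<Rightarrow> real" where "Kn n = real n * real (card (parts n))"

lemma Kn_ge1: "n \<ge> 1 \<Longrightarrow> Kn n \<ge> 1"
  using parts_ne[of n] unfolding Kn_def
  by (metis mult_mono' of_nat_0_le_iff of_nat_1 of_nat_le_iff mult_1)

lemma ln_Kn_le:
  assumes "n \<ge> 1"
  shows "ln (Kn n) \<le> ln n + ln (2 * sqrt n + 1) + 4 * sqrt n * ln n"
proof -
  have c1: "real (card (parts n)) \<ge> 1" using parts_ne[OF assms] by simp
  have n1: "real n \<ge> 1" using assms by simp
  have "ln (Kn n) = ln n + ln (real (card (parts n)))"
    unfolding Kn_def using c1 n1 by (simp add: ln_mult)
  also have "ln (real (card (parts n))) \<le> ln ((2 * sqrt n + 1) * (real n ^ 2) powr (2 * sqrt n))"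
    using card_parts_bound[OF assms] c1 by (subst ln_le_cancel_iff) auto
  also have "\<dots> = ln (2 * sqrt n + 1) + 2 * sqrt n * ln (real n ^ 2)"
  proof -
    have "sqrt (real n) \<ge> 0" by simp
    hence "2 * sqrt n + 1 > 0" by linarith
    moreover have "(real n ^ 2) powr (2 * sqrt n) > 0" using n1 by simp
    ultimately show ?thesis using n1 by (simp add: ln_mult ln_powr)
  qed
  also have "ln (real n ^ 2) = 2 * ln n" using n1 by (simp add: ln_realpow)
  finally show ?thesis by simp
qed

lemma ln_Kn_lim: "(\<lambda>n. ln (Kn n) / real n) \<longlonglongrightarrow> 0"
proof (rule tendsto_sandwich)
  show "eventually (\<lambda>n. 0 \<le> ln (Kn n) / real n) sequentially"
    using eventually_ge_at_top[of 1] by eventually_elim (use Kn_ge1 in auto)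
  show "eventually (\<lambda>n. ln (Kn n) / real n \<le> (ln n + ln (2 * sqrt n + 1) + 4 * sqrt n * ln n) / real n) sequentially"
    using eventually_ge_at_top[of 1] by eventually_elim (use ln_Kn_le in \<open>auto intro: divide_right_mono\<close>)
  show "(\<lambda>n. (ln n + ln (2 * sqrt n + 1) + 4 * sqrt n * ln n) / real n) \<longlonglongrightarrow> 0"
    by real_asymp
qed simp

lemma sum_minus_one: "(\<forall>x\<in>#M. 0 < x) \<Longrightarrow> sum_mset M = sum_mset (image_mset (\<lambda>x. x - 1) M) + size (M::nat multiset)"
  by (induction M) auto

lemma part_count_n: "part_count n n = 1"
proof -
  have "{M :: nat multiset. size M = n \<and> (\<forall>x\<in>#M. 0 < x) \<and> sum_mset M = n} = {replicate_mset n 1}"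
  proof (intro equalityI subsetI)
    fix M assume "M \<in> {M :: nat multiset. size M = n \<and> (\<forall>x\<in>#M. 0 < x) \<and> sum_mset M = n}"
    hence M: "size M = n" "\<forall>x\<in>#M. 0 < x" "sum_mset M = n" by auto
    hence "sum_mset (image_mset (\<lambda>x. x - 1) M) = 0" using sum_minus_one[OF M(2)] by simp
    hence "\<forall>x\<in>#M. x - 1 = 0" by simp
    hence "set_mset M \<subseteq> {1}" using M(2) by force
    hence "M = replicate_mset (size M) 1" by (rule set_mset_subset_singletonD)
    thus "M \<in> {replicate_mset n 1}" using M(1) by simp
  qed auto
  thus ?thesis unfolding part_count_def by simp
qed

lemma part_count_1: "n \<ge> 1 \<Longrightarrow> part_count 1 n = 1"
proof -
  assume n: "n \<ge> 1"
  have "{M :: nat multiset. size M = 1 \<and> (\<forall>x\<in>#M. 0 < x) \<and> sum_mset M = n} = {{#n#}}"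
  proof (intro equalityI subsetI)
    fix M assume "M \<in> {M :: nat multiset. size M = 1 \<and> (\<forall>x\<in>#M. 0 < x) \<and> sum_mset M = n}"
    hence M: "size M = 1" "sum_mset M = n" by auto
    then obtain a where "M = {#a#}" using size_1_singleton_mset by blast
    thus "M \<in> {{#n#}}" using M by simp
  qed (use n in auto)
  thus ?thesis unfolding part_count_def by simp
qed




lemma schwarz_log_bound:
  fixes S :: "complex \<Rightarrow> complex" and B :: real
  assumes holS: "S holomorphic_on ball 0 1"
    and nz: "\<And>u. u \<in> ball 0 1 \<Longrightarrow> S u \<noteq> 0"
    and S0: "S 0 = 1"
    and bnd: "\<And>u. u \<in> ball 0 1 \<Longrightarrow> norm (S u) \<le> B"
    and B1: "B \<ge> 1"
  shows "norm (deriv S 0) \<le> 2 * (ln B + 1)"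
proof -
  obtain g where holg: "g holomorphic_on ball 0 1" and eg: "\<And>u. u \<in> ball 0 1 \<Longrightarrow> exp (g u) = S u"
    using holomorphic_logarithm_exists[of "ball 0 1" S 0] holS nz by auto
  define h where "h u = g u - g 0" for u
  have holh: "h holomorphic_on ball 0 1" unfolding h_def by (intro holomorphic_intros holg)
  have h0: "h 0 = 0" by (simp add: h_def)
  have eg0: "exp (g 0) = 1" using eg[of 0] S0 by simp
  have eh: "exp (h u) = S u" if "u \<in> ball 0 1" for u
    using eg[OF that] eg0 by (simp add: h_def exp_diff)
  define A where "A = ln B + 1"
  have A0: "A > 0" using ln_ge_zero[OF B1] by (simp add: A_def)
  have reh: "Re (h u) < A" if "u \<in> ball 0 1" for u
  proof -
    have "exp (Re (h u)) = norm (S u)" using eh[OF that] norm_exp_eq_Re[of "h u"] by simp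
    also have "\<dots> \<le> B" by (rule bnd[OF that])
    finally have eb: "exp (Re (h u)) \<le> B" .
    have "Re (h u) = ln (exp (Re (h u)))" by simp
    also have "\<dots> \<le> ln B" using eb B1 by (subst ln_le_cancel_iff) auto
    finally have "Re (h u) \<le> ln B" .
    thus ?thesis by (simp add: A_def)
  qed
  have den: "2 * complex_of_real A - h u \<noteq> 0" if "u \<in> ball 0 1" for u
  proof
    assume "2 * complex_of_real A - h u = 0"
    hence "h u = 2 * complex_of_real A" by simp
    hence "Re (h u) = 2 * A" by simp
    thus False using reh[OF that] A0 by simp
  qed
  define \<phi> where "\<phi> u = h u / (2 * complex_of_real A - h u)" for u
  have hol\<phi>: "\<phi> holomorphic_on ball 0 1" unfolding \<phi>_def
    by (intro holomorphic_intros holh) (use den in auto)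
  have \<phi>0: "\<phi> 0 = 0" by (simp add: \<phi>_def h0)
  have \<phi>1: "norm (\<phi> u) < 1" if "norm u < 1" for u
  proof -
    have u: "u \<in> ball 0 1" using that by simp
    define a where "a = Re (h u)"
    define b where "b = Im (h u)"
    have "(norm (h u))^2 < (norm (2 * complex_of_real A - h u))^2"
    proof -
      have "(norm (h u))^2 = a^2 + b^2" by (simp add: a_def b_def cmod_power2)
      moreover have "(norm (2 * complex_of_real A - h u))^2 = (2*A - a)^2 + b^2"
        by (simp add: a_def b_def cmod_power2)
      moreover have "a < A" using reh[OF u] by (simp add: a_def)
      moreover have "(2*A - a)^2 = a^2 + 4*A*(A-a)" by (simp add: power2_eq_square algebra_simps)
      moreover have "0 < 4*A*(A-a)" using A0 \<open>a < A\<close> by simp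
      ultimately show ?thesis by linarith
    qed
    hence "norm (h u) < norm (2 * complex_of_real A - h u)"
      using norm_ge_zero power_less_imp_less_base by blast
    thus ?thesis using den[OF u] by (simp add: \<phi>_def norm_divide divide_less_eq)
  qed
  have "norm (deriv \<phi> 0) \<le> 1"
    using Schwarz_Lemma(2)[OF hol\<phi> \<phi>0 \<phi>1, of 0] by simp
  define h' where "h' = deriv h 0"
  have dh: "(h has_field_derivative h') (at 0)"
    unfolding h'_def by (rule holomorphic_derivI[OF holh open_ball]) simp
  have dd: "((\<lambda>u. 2 * complex_of_real A - h u) has_field_derivative (0 - h')) (at 0)"
    by (rule DERIV_diff[OF DERIV_const dh])
  have "((\<lambda>u. h u / (2 * complex_of_real A - h u)) has_field_derivative
      (h' * (2 * complex_of_real A - h 0) - h 0 * (0 - h')) / ((2 * complex_of_real A - h 0) * (2 * complex_of_real A - h 0))) (at 0)"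
    by (rule DERIV_divide[OF dh dd]) (use den[of 0] in simp)
  hence "(\<phi> has_field_derivative h' / (2 * complex_of_real A)) (at 0)"
    using A0 by (simp add: h0 \<phi>_def[abs_def])
  hence "deriv \<phi> 0 = h' / (2 * complex_of_real A)" by (rule DERIV_imp_deriv)
  hence nh': "norm h' \<le> 2 * A"
    using \<open>norm (deriv \<phi> 0) \<le> 1\<close> A0 by (simp add: norm_divide divide_le_eq norm_mult)
  have "((\<lambda>u. exp (h u)) has_field_derivative exp (h 0) * h') (at 0)"
    by (rule DERIV_fun_exp[OF dh])
  hence de: "((\<lambda>u. exp (h u)) has_field_derivative h') (at 0)" using h0 by simp
  have "(S has_field_derivative h') (at 0)"
  proof (rule has_field_derivative_transform_within_open[OF de open_ball])
    show "0 \<in> ball (0::complex) 1" by simp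
    show "\<And>x. x \<in> ball 0 1 \<Longrightarrow> exp (h x) = S x" by (rule eh)
  qed
  hence "deriv S 0 = h'" by (rule DERIV_imp_deriv)
  thus ?thesis using nh' by (simp add: A_def)
qed



lemma unity_poly:
  assumes m: "m \<ge> 1"
  shows "x ^ m - 1 = (\<Prod>z\<in>{z::complex. z ^ m = 1}. (x - z))"
proof -
  define q :: "complex poly" where "q = monom 1 m + [:-1:]"
  define U where "U = {z::complex. z ^ m = 1}"
  have pq: "poly q x = x ^ m - 1" for x by (simp add: q_def poly_monom)
  have dq: "degree q = m" using m unfolding q_def
    by (subst degree_add_eq_left) (auto simp: degree_monom_eq)
  have lq: "lead_coeff q = 1" using m dq unfolding q_def by (cases m) (auto simp: coeff_pCons)
  have q0: "q \<noteq> 0" using dq m by auto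
  have R: "{z. poly q z = 0} = U" by (auto simp: pq U_def)
  have fU: "finite U" using m unfolding U_def by (intro finite_roots_unity) simp
  have cU: "card U = m" using m unfolding U_def by (intro card_roots_unity_eq) simp
  have sle: "(\<Sum>z\<in>U. order z q) \<le> m" using sum_order_le_degree[OF q0] R dq by simp
  have o1: "order z q = 1" if z: "z \<in> U" for z
  proof -
    have ge: "order y q \<ge> 1" if "y \<in> U" for y
      using that R q0 by (metis (mono_tags) mem_Collect_eq order_root less_one not_le)
    have "order z q \<le> 1"
    proof (rule ccontr)
      assume "\<not> order z q \<le> 1"
      hence "order z q \<ge> 2" by simp
      have e1: "(\<Sum>y\<in>U. order y q) = order z q + (\<Sum>y\<in>U - {z}. order y q)"
        using fU z by (simp add: sum.remove)
      have e2: "(\<Sum>y\<in>U - {z}. order y q) \<ge> (\<Sum>y\<in>U - {z}. 1)"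
        by (rule sum_mono) (use ge in auto)
      have e3: "(\<Sum>y\<in>U - {z}. (1::nat)) = m - 1" using fU z cU by simp
      show False using e1 e2 e3 sle \<open>order z q \<ge> 2\<close> m by linarith
    qed
    thus ?thesis using ge[OF z] by simp
  qed
  have "q = smult (lead_coeff q) (\<Prod>z|poly q z = 0. [:-z, 1:] ^ order z q)"
    by (rule complex_poly_decompose[symmetric])
  also have "\<dots> = (\<Prod>z\<in>U. [:-z, 1:])" using lq R o1 by (simp cong: prod.cong)
  finally have "poly q x = poly (\<Prod>z\<in>U. [:-z, 1:]) x" by simp
  thus ?thesis by (simp add: pq poly_prod U_def)
qed

lemma unity_prod:
  assumes m: "m \<ge> 1"
  shows "(\<Prod>z\<in>{z::complex. z ^ m = 1}. (1 - c * z)) = 1 - c ^ m"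
proof (cases "c = 0")
  case True thus ?thesis using m by simp
next
  case False
  have cU: "card {z::complex. z ^ m = 1} = m" using m by (intro card_roots_unity_eq) simp
  have "(\<Prod>z\<in>{z::complex. z ^ m = 1}. (1 - c * z)) = (\<Prod>z\<in>{z::complex. z ^ m = 1}. c * (1/c - z))"
    using False by (intro prod.cong) (auto simp: field_simps)
  also have "\<dots> = c ^ m * (\<Prod>z\<in>{z::complex. z ^ m = 1}. (1/c - z))"
    by (simp add: prod.distrib cU)
  also have "\<dots> = c ^ m * ((1/c) ^ m - 1)" by (simp add: unity_poly[OF m])
  also have "\<dots> = 1 - c ^ m" using False by (simp add: field_simps power_divide)
  finally show ?thesis .
qed

lemma coeff1_mult: "coeff p 0 = 1 \<Longrightarrow> coeff q 0 = 1 \<Longrightarrow> coeff (p * q) 1 = coeff p 1 + coeff (q :: complex poly) 1"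
  by (simp add: coeff_mult)

lemma coeff0_prodpow: "coeff (\<Prod>z\<in>Z. [:1, - a z:] ^ e z) 0 = (1::complex)"
  by (simp flip: poly_0_coeff_0 add: poly_prod)

lemma coeff1_pow: "coeff ([:1, - b:] ^ k) 1 = - of_nat k * (b::complex)"
proof (induction k)
  case 0 thus ?case by simp
next
  case (Suc k)
  have "coeff ([:1, - b:] ^ Suc k) 1 = coeff ([:1, - b:] * [:1, - b:] ^ k) 1" by simp
  also have "\<dots> = coeff [:1, - b:] 1 + coeff ([:1, - b:] ^ k) 1"
    by (rule coeff1_mult) (simp_all add: coeff_0_power)
  finally show ?case using Suc by (simp add: algebra_simps)
qed

lemma coeff1_prodpow:
  assumes "finite Z"
  shows "coeff (\<Prod>z\<in>Z. [:1, - a z:] ^ e z) 1 = - (\<Sum>z\<in>Z. of_nat (e z) * (a z :: complex))"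
  using assms
proof (induction Z rule: finite_induct)
  case empty thus ?case by simp
next
  case (insert x F)
  have "coeff (\<Prod>z\<in>insert x F. [:1, - a z:] ^ e z) 1 = coeff ([:1, - a x:] ^ e x * (\<Prod>z\<in>F. [:1, - a z:] ^ e z)) 1"
    using insert by simp
  also have "\<dots> = coeff ([:1, - a x:] ^ e x) 1 + coeff (\<Prod>z\<in>F. [:1, - a z:] ^ e z) 1"
    by (rule coeff1_mult) (simp_all add: coeff_0_power coeff0_prodpow)
  finally show ?case using insert coeff1_pow[of "a x" "e x"] by (simp add: algebra_simps)
qed

lemma deriv_prodpow:
  assumes "finite Z"
  shows "deriv (\<lambda>u. \<Prod>z\<in>Z. (1 - a z * u) ^ e z) 0 = - (\<Sum>z\<in>Z. of_nat (e z) * (a z :: complex))"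
proof -
  define p where "p = (\<Prod>z\<in>Z. [:1, - a z:] ^ e z)"
  have "(\<lambda>u. \<Prod>z\<in>Z. (1 - a z * u) ^ e z) = poly p"
    by (auto simp: p_def poly_prod fun_eq_iff mult.commute)
  hence "deriv (\<lambda>u. \<Prod>z\<in>Z. (1 - a z * u) ^ e z) 0 = poly (pderiv p) 0"
    by (simp add: DERIV_imp_deriv poly_DERIV)
  also have "\<dots> = coeff p 1" by (simp add: poly_0_coeff_0 coeff_pderiv)
  finally show ?thesis using coeff1_prodpow[OF assms] by (simp add: p_def)
qed

lemma sgn_eq: "(z::complex) \<noteq> 0 \<Longrightarrow> sgn z = z / of_real (norm z)"
  by (simp add: sgn_div_norm divide_inverse scaleR_conv_of_real mult.commute)

lemma w_facts:
  fixes z :: complex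
  assumes "z \<noteq> 0"
  defines "w \<equiv> (if norm z \<le> 1 then z else z / of_real ((norm z)^2))"
  shows "norm w = (if norm z \<le> 1 then norm z else 1 / norm z)" "norm w \<le> 1" "w \<noteq> 0"
    "norm (sgn z - w) = 1 - norm w"
    "1 - norm w \<le> \<bar>ln (norm z)\<bar>"
    "\<And>x. norm x = 1 \<Longrightarrow> norm (x - z) = (if norm z > 1 then norm z else 1) * norm (1 - w * cnj x)"
proof -
  have z0: "z \<noteq> 0" using assms(1) .
  have nz: "norm z > 0" using z0 by simp
  show nw: "norm w = (if norm z \<le> 1 then norm z else 1 / norm z)"
    using nz by (auto simp: w_def norm_divide power2_eq_square norm_mult)
  show "norm w \<le> 1" using nw nz by auto
  show "w \<noteq> 0" using z0 by (auto simp: w_def)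
  have wsg: "w = of_real (norm w) * sgn z"
    using nz nw z0 by (auto simp: w_def sgn_eq power2_eq_square field_simps)
  have "sgn z - w = of_real (1 - norm w) * sgn z" by (subst wsg) (simp add: algebra_simps)
  hence "norm (sgn z - w) = norm (of_real (1 - norm w) :: complex) * norm (sgn z)" by (simp only: norm_mult)
  hence "norm (sgn z - w) = \<bar>1 - norm w\<bar> * norm (sgn z)" by (simp only: norm_of_real)
  thus "norm (sgn z - w) = 1 - norm w" using z0 \<open>norm w \<le> 1\<close> by (simp add: norm_sgn)
  show "1 - norm w \<le> \<bar>ln (norm z)\<bar>"
  proof (cases "norm z \<le> 1")
    case True
    have "ln (norm z) \<le> norm z - 1" using nz by (rule ln_le_minus_one)
    thus ?thesis using True nw by simp
  next
    case False
    have "ln (1 / norm z) \<le> 1 / norm z - 1" using nz by (intro ln_le_minus_one) simp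
    hence "- ln (norm z) \<le> 1 / norm z - 1" using nz by (simp add: ln_div)
    thus ?thesis using False nw by simp
  qed
  fix x :: complex assume x: "norm x = 1"
  have xx: "x * cnj x = 1" using x by (simp add: complex_norm_square[symmetric])
  show "norm (x - z) = (if norm z > 1 then norm z else 1) * norm (1 - w * cnj x)"
  proof (cases "norm z \<le> 1")
    case True
    have "1 - w * cnj x = (x - z) * cnj x" using True xx by (simp add: w_def algebra_simps)
    thus ?thesis using True x by (simp add: norm_mult)
  next
    case False
    have zz: "z * cnj z = of_real ((norm z)^2)" by (rule complex_norm_square[symmetric])
    have zz2: "(complex_of_real (norm z))^2 = z * cnj z" using complex_norm_square[of z] by simp
    have eq: "1 - w * cnj x = cnj (z - x) * z / of_real ((norm z)^2)"
      using False nz by (simp add: w_def field_simps zz2)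
    have n1: "norm (cnj (z - x)) = norm (x - z)" by (metis complex_mod_cnj norm_minus_commute)
    have "norm (1 - w * cnj x) = norm (cnj (z - x)) * norm z / norm (of_real ((norm z)^2) :: complex)"
      by (simp only: eq norm_mult norm_divide)
    also have "\<dots> = norm (x - z) / norm z" using nz by (simp only: n1) (simp add: power2_eq_square norm_mult)
    finally have "norm (1 - w * cnj x) = norm (x - z) / norm z" .
    thus ?thesis using False nz by simp
  qed
qed

lemma core_bound:
  fixes Z :: "complex set" and e :: "complex \<Rightarrow> nat" and K :: real and m :: nat
  assumes fin: "finite Z" and nz: "0 \<notin> Z" and K1: "1 \<le> K"
    and bnd: "\<And>x. norm x = 1 \<Longrightarrow> norm (\<Prod>z\<in>Z. (x - z) ^ e z) \<le> K"
    and prod1: "(\<Prod>z\<in>Z. norm z ^ e z) = 1"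
    and m: "m \<ge> 1"
  shows "norm (\<Sum>z\<in>Z. of_nat (e z) * sgn z ^ m) \<le> 4 * m * ln K + 2"
proof -
  define w where "w z = (if norm z \<le> 1 then z else z / of_real ((norm z)^2))" for z :: complex
  define T where "T y = (\<Prod>z\<in>Z. (1 - w z * y) ^ e z)" for y
  define c where "c z = (if norm z > 1 then norm z else 1)" for z :: complex
  define Mp where "Mp = (\<Prod>z\<in>Z. c z ^ e z)"
  have znz: "z \<noteq> 0" if "z \<in> Z" for z using nz that by auto
  note wf = w_facts[OF znz, folded w_def]
  have c1: "c z \<ge> 1" for z by (simp add: c_def)
  have Mp1: "Mp \<ge> 1" unfolding Mp_def by (rule prod_ge_1) (use c1 in auto)
  have HT: "norm (\<Prod>z\<in>Z. (x - z) ^ e z) = Mp * norm (T (cnj x))" if x: "norm x = 1" for x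
  proof -
    have "norm (\<Prod>z\<in>Z. (x - z) ^ e z) = (\<Prod>z\<in>Z. norm (x - z) ^ e z)"
      by (simp add: prod_norm[symmetric] norm_power)
    also have "\<dots> = (\<Prod>z\<in>Z. (c z * norm (1 - w z * cnj x)) ^ e z)"
      by (intro prod.cong refl) (simp add: wf(6)[OF _ x] c_def)
    also have "\<dots> = Mp * (\<Prod>z\<in>Z. norm (1 - w z * cnj x) ^ e z)"
      by (simp add: Mp_def power_mult_distrib prod.distrib)
    also have "(\<Prod>z\<in>Z. norm (1 - w z * cnj x) ^ e z) = norm (T (cnj x))"
      by (simp add: T_def prod_norm[symmetric] norm_power)
    finally show ?thesis .
  qed
  have holT: "T holomorphic_on UNIV" unfolding T_def by (intro holomorphic_intros)
  have hT: "T holomorphic_on interior (cball 0 1)" using holT by (rule holomorphic_on_subset) simp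
  have cT: "continuous_on (closure (cball 0 1)) T"
    using holT holomorphic_on_imp_continuous_on continuous_on_subset by blast
  have fT: "norm (T v) \<le> K / Mp" if "v \<in> frontier (cball (0::complex) 1)" for v
  proof -
    from that have v: "norm (cnj v) = 1" by simp
    have "Mp * norm (T v) = norm (\<Prod>z\<in>Z. (cnj v - z) ^ e z)" using HT[OF v] by simp
    also have "\<dots> \<le> K" by (rule bnd[OF v])
    finally show "norm (T v) \<le> K / Mp" using Mp1 by (simp add: field_simps)
  qed
  have Tb: "norm (T y) \<le> K / Mp" if y: "y \<in> cball 0 1" for y
    using maximum_modulus_frontier[OF hT cT _ fT y] by simp
  have T0: "T 0 = 1" by (simp add: T_def)
  have MpK: "Mp \<le> K" using Tb[of 0] T0 Mp1 by (simp add: field_simps)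
  have TK: "norm (T y) \<le> K" if "y \<in> cball 0 1" for y
  proof -
    have "K / Mp \<le> K" using Mp1 K1 by (simp add: field_simps mult_left_mono[of 1 Mp K, simplified])
    thus ?thesis using Tb[OF that] by linarith
  qed
  have lnsum0: "(\<Sum>z\<in>Z. real (e z) * ln (norm z)) = 0"
  proof -
    have "ln (\<Prod>z\<in>Z. norm z ^ e z) = (\<Sum>z\<in>Z. ln (norm z ^ e z))"
      using fin znz by (intro ln_prod) auto
    also have "\<dots> = (\<Sum>z\<in>Z. real (e z) * ln (norm z))"
      using znz by (intro sum.cong refl) (simp add: ln_realpow)
    finally show ?thesis using prod1 by simp
  qed
  have lnMp: "ln Mp = (\<Sum>z\<in>Z. real (e z) * ln (c z))"
  proof -
    have "ln Mp = (\<Sum>z\<in>Z. ln (c z ^ e z))" unfolding Mp_def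
      using fin c1 by (intro ln_prod) (auto simp: c_def)
    also have "\<dots> = (\<Sum>z\<in>Z. real (e z) * ln (c z))"
      using c1 by (intro sum.cong refl) (simp add: ln_realpow less_le_trans[OF zero_less_one])
    finally show ?thesis .
  qed
  have absln: "(\<Sum>z\<in>Z. real (e z) * \<bar>ln (norm z)\<bar>) = 2 * ln Mp"
  proof -
    have "(\<Sum>z\<in>Z. real (e z) * \<bar>ln (norm z)\<bar>) = (\<Sum>z\<in>Z. 2 * (real (e z) * ln (c z)) - real (e z) * ln (norm z))"
    proof (intro sum.cong refl)
      fix z assume z: "z \<in> Z"
      show "real (e z) * \<bar>ln (norm z)\<bar> = 2 * (real (e z) * ln (c z)) - real (e z) * ln (norm z)"
      proof (cases "norm z > 1")
        case True
        hence "ln (norm z) > 0" by (rule ln_gt_zero)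
        thus ?thesis using True by (simp add: c_def algebra_simps)
      next
        case False
        hence "ln (norm z) \<le> 0" using znz[OF z] by simp
        thus ?thesis using False by (simp add: c_def algebra_simps)
      qed
    qed
    also have "\<dots> = 2 * ln Mp" using lnsum0 lnMp by (simp add: sum_subtractf sum_distrib_left)
    finally show ?thesis .
  qed
  have lnMpK: "ln Mp \<le> ln K" using MpK Mp1 by simp
  define S where "S u = (\<Prod>z\<in>Z. (1 - w z ^ m * u) ^ e z)" for u
  have holS: "S holomorphic_on ball 0 1" unfolding S_def by (intro holomorphic_intros)
  have S0: "S 0 = 1" by (simp add: S_def)
  have Snz: "S u \<noteq> 0" if u: "u \<in> ball 0 1" for u
  proof -
    have "1 - w z ^ m * u \<noteq> 0" if z: "z \<in> Z" for z
    proof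
      assume "1 - w z ^ m * u = 0"
      hence "norm (w z ^ m * u) = 1" by (metis eq_iff_diff_eq_0 norm_one)
      moreover have "norm (w z ^ m * u) < 1"
      proof -
        have w1: "norm (w z ^ m) \<le> 1" using wf(2)[OF z] by (simp add: norm_power power_le_one)
        have "norm (w z ^ m * u) = norm (w z ^ m) * norm u" by (rule norm_mult)
        also have "\<dots> \<le> 1 * norm u" by (rule mult_right_mono[OF w1]) simp
        also have "\<dots> < 1" using u by simp
        finally show ?thesis .
      qed
      ultimately show False by simp
    qed
    thus ?thesis unfolding S_def using fin by (simp add: prod_zero_iff)
  qed
  have SK: "norm (S u) \<le> K ^ m" if u: "u \<in> ball 0 1" for u
  proof (cases "u = 0")
    case True thus ?thesis using S0 K1 by simp
  next
    case False
    define y where "y = complex_of_real (root m (norm u)) * cis (Arg u / real m)"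
    have ym: "y ^ m = u"
    proof -
      have r: "root m (norm u) ^ m = norm u" using m by simp
      have "y ^ m = complex_of_real (root m (norm u)) ^ m * cis (Arg u / real m) ^ m" by (simp add: y_def power_mult_distrib)
      also have "complex_of_real (root m (norm u)) ^ m = complex_of_real (norm u)" by (simp only: of_real_power[symmetric] r)
      also have "cis (Arg u / real m) ^ m = cis (Arg u)" using m by (simp add: Complex.DeMoivre)
      also have "complex_of_real (norm u) * cis (Arg u) = u" using False by (simp add: cis_Arg sgn_eq)
      finally show ?thesis .
    qed
    have ny: "norm y < 1" using u m by (simp add: y_def norm_mult)
    define U where "U = {z::complex. z ^ m = 1}"
    have fU: "finite U" using m unfolding U_def by (intro finite_roots_unity) simp
    have cU: "card U = m" using m unfolding U_def by (intro card_roots_unity_eq) simp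
    have "S u = (\<Prod>z\<in>Z. (\<Prod>\<zeta>\<in>U. 1 - (w z * y) * \<zeta>) ^ e z)"
      unfolding S_def U_def using unity_prod[OF m] by (simp add: ym[symmetric] power_mult_distrib)
    also have "\<dots> = (\<Prod>z\<in>Z. \<Prod>\<zeta>\<in>U. (1 - (w z * y) * \<zeta>) ^ e z)"
      by (simp only: prod_power_distrib)
    also have "\<dots> = (\<Prod>\<zeta>\<in>U. \<Prod>z\<in>Z. (1 - (w z * y) * \<zeta>) ^ e z)"
      by (rule prod.swap)
    also have "\<dots> = (\<Prod>\<zeta>\<in>U. T (\<zeta> * y))"
      unfolding T_def by (simp add: mult_ac)
    finally have "norm (S u) = (\<Prod>\<zeta>\<in>U. norm (T (\<zeta> * y)))" by (simp add: prod_norm)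
    also have "\<dots> \<le> (\<Prod>\<zeta>\<in>U. K)"
    proof (rule prod_mono)
      fix \<zeta> assume "\<zeta> \<in> U"
      hence "norm \<zeta> = 1" unfolding U_def using m power_eq_1_iff[of \<zeta> m] by auto
      hence "\<zeta> * y \<in> cball 0 1" using ny by (simp add: norm_mult)
      thus "0 \<le> norm (T (\<zeta> * y)) \<and> norm (T (\<zeta> * y)) \<le> K" using TK by simp
    qed
    also have "\<dots> = K ^ m" using cU by simp
    finally show ?thesis .
  qed
  have "norm (deriv S 0) \<le> 2 * (ln (K ^ m) + 1)"
    by (rule schwarz_log_bound[OF holS Snz S0 SK]) (use K1 in \<open>auto simp: one_le_power\<close>)
  moreover have "deriv S 0 = - (\<Sum>z\<in>Z. of_nat (e z) * w z ^ m)"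
    unfolding S_def[abs_def] by (rule deriv_prodpow[OF fin])
  ultimately have Wb: "norm (\<Sum>z\<in>Z. of_nat (e z) * w z ^ m) \<le> 2 * m * ln K + 2"
    using K1 by (simp add: ln_realpow algebra_simps)
  have "norm (\<Sum>z\<in>Z. of_nat (e z) * sgn z ^ m - of_nat (e z) * w z ^ m) \<le> (\<Sum>z\<in>Z. norm (of_nat (e z) * sgn z ^ m - of_nat (e z) * w z ^ m))"
    by (rule norm_sum)
  also have "\<dots> \<le> (\<Sum>z\<in>Z. real m * (real (e z) * \<bar>ln (norm z)\<bar>))"
  proof (rule sum_mono)
    fix z assume z: "z \<in> Z"
    have "norm (sgn z ^ m - w z ^ m) \<le> real m * norm (sgn z - w z)"
      by (rule norm_power_diff) (use wf(2)[OF z] znz[OF z] in \<open>auto simp: norm_sgn\<close>)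
    also have "\<dots> \<le> real m * \<bar>ln (norm z)\<bar>" using wf(4,5)[OF z] by (simp add: mult_left_mono)
    finally have "norm (sgn z ^ m - w z ^ m) \<le> real m * \<bar>ln (norm z)\<bar>" .
    hence "real (e z) * norm (sgn z ^ m - w z ^ m) \<le> real (e z) * (real m * \<bar>ln (norm z)\<bar>)"
      by (rule mult_left_mono) simp
    thus "norm (of_nat (e z) * sgn z ^ m - of_nat (e z) * w z ^ m) \<le> real m * (real (e z) * \<bar>ln (norm z)\<bar>)"
      by (simp add: right_diff_distrib[symmetric] norm_mult mult_ac)
  qed
  also have "\<dots> = real m * (2 * ln Mp)" by (simp add: sum_distrib_left[symmetric] absln)
  finally have D: "norm ((\<Sum>z\<in>Z. of_nat (e z) * sgn z ^ m) - (\<Sum>z\<in>Z. of_nat (e z) * w z ^ m)) \<le> real m * (2 * ln Mp)"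
    by (simp add: sum_subtractf)
  have "norm (\<Sum>z\<in>Z. of_nat (e z) * sgn z ^ m) \<le> norm ((\<Sum>z\<in>Z. of_nat (e z) * sgn z ^ m) - (\<Sum>z\<in>Z. of_nat (e z) * w z ^ m)) + norm (\<Sum>z\<in>Z. of_nat (e z) * w z ^ m)"
    using norm_triangle_ineq[of "(\<Sum>z\<in>Z. of_nat (e z) * sgn z ^ m) - (\<Sum>z\<in>Z. of_nat (e z) * w z ^ m)" "\<Sum>z\<in>Z. of_nat (e z) * w z ^ m"]
    by (simp only: diff_add_cancel)
  also have "\<dots> \<le> real m * (2 * ln K) + (2 * m * ln K + 2)"
  proof -
    have "real m * (2 * ln Mp) \<le> real m * (2 * ln K)" using lnMpK by (intro mult_left_mono) auto
    thus ?thesis using D Wb by linarith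
  qed
  finally have fin1: "norm (\<Sum>z\<in>Z. of_nat (e z) * sgn z ^ m) \<le> real m * (2 * ln K) + (2 * m * ln K + 2)" .
  have "real m * (2 * ln K) + (2 * m * ln K + 2) = 4 * real m * ln K + 2" by (simp add: algebra_simps)
  thus ?thesis using fin1 by linarith
qed



definition LP :: "(complex \<times> int) list \<Rightarrow> complex \<Rightarrow> complex" where
  "LP F z = sum_list (map (\<lambda>(c,k). c * power_int z k) F)"

definition c0 :: "(complex \<times> int) list \<Rightarrow> complex" where
  "c0 F = sum_list (map (\<lambda>(c,k). if k = 0 then c else 0) F)"

fun mulLP :: "(complex \<times> int) list \<Rightarrow> (complex \<times> int) list \<Rightarrow> (complex \<times> int) list" where
  "mulLP [] G = []"
| "mulLP (x # F) G = map (\<lambda>(d,l). (fst x * d, snd x + l)) G @ mulLP F G"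

definition cnjLP :: "(complex \<times> int) list \<Rightarrow> (complex \<times> int) list" where
  "cnjLP F = map (\<lambda>(c,k). (cnj c, -k)) F"

definition scLP :: "complex \<Rightarrow> (complex \<times> int) list \<Rightarrow> (complex \<times> int) list" where
  "scLP a F = map (\<lambda>(c,k). (a * c, k)) F"

lemma LP_Nil [simp]: "LP [] z = 0" by (simp add: LP_def)
lemma LP_Cons [simp]: "LP ((c,k) # F) z = c * power_int z k + LP F z" by (simp add: LP_def)
lemma LP_append [simp]: "LP (F @ G) z = LP F z + LP G z" by (simp add: LP_def)

lemma LP_sc [simp]: "LP (scLP a F) z = a * LP F z"
  by (induction F) (auto simp: scLP_def algebra_simps)

lemma LP_map_mul: "z \<noteq> 0 \<Longrightarrow> LP (map (\<lambda>(d,l). (c * d, k + l)) G) z = c * power_int z k * LP G z"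
  by (induction G) (auto simp: power_int_add algebra_simps)

lemma LP_mul: "z \<noteq> 0 \<Longrightarrow> LP (mulLP F G) z = LP F z * LP G z"
proof (induction F)
  case Nil then show ?case by simp
next
  case (Cons x F)
  obtain c k where x: "x = (c,k)" by (cases x)
  show ?case using Cons by (simp add: x LP_map_mul distrib_right mult.assoc)
qed

lemma LP_cnj: "norm z = 1 \<Longrightarrow> LP (cnjLP F) z = cnj (LP F z)"
proof (induction F)
  case Nil then show ?case by (simp add: cnjLP_def)
next
  case (Cons x F)
  obtain c k where x: "x = (c,k)" by (cases x)
  have z0: "z \<noteq> 0" using Cons by auto
  have "z * cnj z = 1" using complex_norm_square[of z] Cons.prems by simp
  hence inv: "inverse z = cnj z" by (rule inverse_unique)
  have "power_int z (-k) = cnj (power_int z k)"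
    by (simp add: power_int_minus power_int_inverse[symmetric] inv)
  thus ?case using Cons by (simp add: x cnjLP_def)
qed

lemma real_poly_LP:
  fixes p :: "complex \<Rightarrow> real"
  assumes "real_polynomial_function p"
  shows "\<exists>F. \<forall>z. norm z = 1 \<longrightarrow> p z = Re (LP F z)"
  using assms
proof (induction p rule: real_polynomial_function.induct)
  case (linear f)
  interpret bounded_linear f by fact
  define a where "a = complex_of_real (f 1) - \<i> * complex_of_real (f \<i>)"
  have H: "f z = Re (a * z)" for z
  proof -
    have e: "z = Re z *\<^sub>R 1 + Im z *\<^sub>R \<i>" by (simp add: complex_eq_iff)
    have "f z = f (Re z *\<^sub>R 1) + f (Im z *\<^sub>R \<i>)" by (subst e) (rule add)
    also have "\<dots> = Re z * f 1 + Im z * f \<i>" by (simp only: scale real_scaleR_def)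
    finally have "f z = Re z * f 1 + Im z * f \<i>" .
    thus ?thesis by (simp add: a_def)
  qed
  have "\<forall>z. norm z = 1 \<longrightarrow> f z = Re (LP [(a, 1)] z)"
    by (simp add: H)
  thus ?case by blast
next
  case (const c)
  have "\<forall>z. norm z = 1 \<longrightarrow> c = Re (LP [(complex_of_real c, 0)] z)" by simp
  thus ?case by blast
next
  case (add f g)
  then obtain F G where "\<forall>z. norm z = 1 \<longrightarrow> f z = Re (LP F z)" "\<forall>z. norm z = 1 \<longrightarrow> g z = Re (LP G z)" by blast
  hence "\<forall>z. norm z = 1 \<longrightarrow> f z + g z = Re (LP (F @ G) z)" by simp
  thus ?case by blast
next
  case (mult f g)
  then obtain F G where F: "\<forall>z. norm z = 1 \<longrightarrow> f z = Re (LP F z)" and G: "\<forall>z. norm z = 1 \<longrightarrow> g z = Re (LP G z)" by blast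
  have "\<forall>z. norm z = 1 \<longrightarrow> f z * g z = Re (LP (scLP (1/2) (mulLP F G @ mulLP F (cnjLP G))) z)"
  proof (intro allI impI)
    fix z :: complex assume z: "norm z = 1"
    hence z0: "z \<noteq> 0" by auto
    have "Re (LP (scLP (1/2) (mulLP F G @ mulLP F (cnjLP G))) z) = (Re (LP F z * LP G z) + Re (LP F z * cnj (LP G z))) / 2"
      using z z0 by (simp add: LP_mul LP_cnj)
    also have "\<dots> = Re (LP F z) * Re (LP G z)" by (simp add: algebra_simps)
    finally show "f z * g z = Re (LP (scLP (1/2) (mulLP F G @ mulLP F (cnjLP G))) z)" using F G z by simp
  qed
  thus ?case by blast
qed

lemma cis_powint: "power_int (cis t) k = cis (of_int k * t)"
proof (cases k rule: int_cases)
  case (nonneg n) thus ?thesis by (simp add: Complex.DeMoivre)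
next
  case (neg n)
  have k: "k = - int (Suc n)" using neg by simp
  have "power_int (cis t) k = inverse (power_int (cis t) (int (Suc n)))" by (simp only: k power_int_minus)
  also have "\<dots> = inverse (cis (real (Suc n) * t))" by (simp only: power_int_of_nat Complex.DeMoivre)
  also have "\<dots> = cis (of_int k * t)" by (simp add: k algebra_simps)
  finally show ?thesis .
qed

lemma int_cis: "((\<lambda>t. cis (of_int k * t)) has_integral (if k = 0 then complex_of_real (2*pi) else 0)) {0..2*pi}"
proof (cases "k = 0")
  case True
  from has_integral_const_real[of "1::complex" 0 "2*pi"]
  show ?thesis using True by (simp add: scaleR_conv_of_real)
next
  case False
  define F where "F t = cis (of_int k * t) / (\<i> * of_int k)" for t
  have "((\<lambda>t. cis (of_int k * t)) has_integral (F (2*pi) - F 0)) {0..2*pi}"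
  proof (rule fundamental_theorem_of_calculus)
    show "0 \<le> 2*pi" by simp
    fix t :: real
    have "((\<lambda>t. cis (of_int k * t)) has_derivative (\<lambda>h. (of_int k * h) *\<^sub>R (\<i> * cis (of_int k * t)))) (at t within {0..2*pi})"
      by (intro has_derivative_cis derivative_intros)
    hence "((\<lambda>t. cis (of_int k * t)) has_vector_derivative (of_int k * (\<i> * cis (of_int k * t)))) (at t within {0..2*pi})"
      by (simp add: has_vector_derivative_def scaleR_conv_of_real mult_ac)
    hence "(F has_vector_derivative (of_int k * (\<i> * cis (of_int k * t))) / (\<i> * of_int k)) (at t within {0..2*pi})"
      unfolding F_def by (rule has_vector_derivative_divide)
    thus "(F has_vector_derivative cis (of_int k * t)) (at t within {0..2*pi})"
      using False by (simp add: field_simps)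
  qed
  moreover have "F (2*pi) = F 0"
  proof -
    have "cis (of_int k * (2*pi)) = cis ((2 * pi) * of_int k)" by (simp only: mult.commute)
    also have "\<dots> = 1" by (simp only: complex_eq_iff cis.sel cos_int_2pin sin_int_2pin one_complex.sel)
    finally have "cis (of_int k * (2*pi)) = 1" .
    thus ?thesis by (simp add: F_def)
  qed
  ultimately show ?thesis using False by simp
qed

lemma LP_integral: "((\<lambda>t. LP F (cis t)) has_integral (complex_of_real (2*pi) * c0 F)) {0..2*pi}"
proof (induction F)
  case Nil thus ?case by (simp add: c0_def)
next
  case (Cons x F)
  obtain c k where x: "x = (c,k)" by (cases x)
  have "((\<lambda>t. c * cis (of_int k * t)) has_integral (c * (if k = 0 then complex_of_real (2*pi) else 0))) {0..2*pi}"
    by (rule has_integral_mult_right[OF int_cis])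
  have eq1: "(\<lambda>t. LP ((c,k)#F) (cis t)) = (\<lambda>t. c * cis (of_int k * t) + LP F (cis t))"
    by (simp add: cis_powint)
  have eq2: "complex_of_real (2*pi) * c0 ((c,k)#F) = c * (if k = 0 then complex_of_real (2*pi) else 0) + complex_of_real (2*pi) * c0 F"
    by (simp add: c0_def algebra_simps)
  show ?case unfolding x eq1 eq2 by (rule has_integral_add[OF \<open>((\<lambda>t. c * cis (of_int k * t)) has_integral _) _\<close> Cons.IH])
qed

lemma weyl:
  fixes Z :: "nat \<Rightarrow> complex set" and e :: "nat \<Rightarrow> complex \<Rightarrow> nat" and D :: "nat \<Rightarrow> real" and f :: "complex \<Rightarrow> real"
  assumes nz: "\<And>n. 0 \<notin> Z n" and Dnn: "\<And>n. D n \<ge> 0"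
    and H0: "(\<lambda>n. (1 / D n) * (\<Sum>z\<in>Z n. real (e n z))) \<longlonglongrightarrow> 1"
    and Hm: "\<And>m. m \<ge> 1 \<Longrightarrow> (\<lambda>n. complex_of_real (1 / D n) * (\<Sum>z\<in>Z n. of_nat (e n z) * sgn z ^ m)) \<longlonglongrightarrow> 0"
    and cf: "continuous_on (sphere 0 1) f"
  shows "(\<lambda>n. (1 / D n) * (\<Sum>z\<in>Z n. real (e n z) * f (sgn z))) \<longlonglongrightarrow> (1/(2*pi)) * integral {0..2*pi} (\<lambda>t. f (cis t))"
proof -
  define B where "B n k = complex_of_real (1 / D n) * (\<Sum>z\<in>Z n. of_nat (e n z) * power_int (sgn z) k)" for n k
  have sg1: "norm (sgn z) = 1" if "z \<in> Z n" for z n using nz[of n] that by (auto simp: norm_sgn)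
  have Bpos: "(\<lambda>n. B n (int m)) \<longlonglongrightarrow> 0" if m: "m \<ge> 1" for m
    using Hm[OF m] by (simp add: B_def)
  have Blim: "(\<lambda>n. B n k) \<longlonglongrightarrow> (if k = 0 then 1 else 0)" for k
  proof (cases "k = 0")
    case True
    have "(\<lambda>n. complex_of_real ((1 / D n) * (\<Sum>z\<in>Z n. real (e n z)))) \<longlonglongrightarrow> complex_of_real 1"
      by (rule tendsto_of_real[OF H0])
    moreover have "B n k = complex_of_real ((1 / D n) * (\<Sum>z\<in>Z n. real (e n z)))" for n
      using True by (simp add: B_def)
    ultimately show ?thesis using True by simp
  next
    case False
    show ?thesis
    proof (cases "k > 0")
      case True
      define m where "m = nat k"
      have m: "k = int m" "m \<ge> 1" using True by (auto simp: m_def)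
      thus ?thesis using Bpos[OF m(2)] False by simp
    next
      case False2: False
      define m where "m = nat (- k)"
      have m: "k = - int m" "m \<ge> 1" using False False2 by (auto simp: m_def)
      have "B n k = cnj (B n (int m))" for n
      proof -
        have "power_int (sgn z) k = cnj (sgn z ^ m)" if z: "z \<in> Z n" for z
        proof -
          have "sgn z * cnj (sgn z) = 1" using sg1[OF z] complex_norm_square[of "sgn z"] by simp
          hence "inverse (sgn z) = cnj (sgn z)" by (rule inverse_unique)
          hence "inverse (sgn z ^ m) = cnj (sgn z) ^ m" by (simp add: power_inverse[symmetric])
          thus ?thesis using m by (simp add: power_int_minus)
        qed
        thus ?thesis unfolding B_def by (simp add: cnj_sum)
      qed
      moreover have "(\<lambda>n. cnj (B n (int m))) \<longlonglongrightarrow> cnj 0" by (rule tendsto_cnj[OF Bpos[OF m(2)]])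
      ultimately show ?thesis using False by simp
    qed
  qed
  have avgC: "complex_of_real (1 / D n) * (\<Sum>z\<in>Z n. of_nat (e n z) * LP F (sgn z)) = sum_list (map (\<lambda>(c,k). c * B n k) F)" for n F
  proof (induction F)
    case Nil thus ?case by simp
  next
    case (Cons x F)
    obtain c k where x: "x = (c,k)" by (cases x)
    have "complex_of_real (1 / D n) * (\<Sum>z\<in>Z n. of_nat (e n z) * LP ((c,k)#F) (sgn z))
        = c * B n k + complex_of_real (1 / D n) * (\<Sum>z\<in>Z n. of_nat (e n z) * LP F (sgn z))"
      by (simp add: B_def distrib_left sum.distrib sum_distrib_left algebra_simps)
    thus ?case using Cons by (simp add: x)
  qed
  have avgR: "(1 / D n) * (\<Sum>z\<in>Z n. real (e n z) * Re (LP F (sgn z))) = Re (sum_list (map (\<lambda>(c,k). c * B n k) F))" for n F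
  proof -
    have "(1 / D n) * (\<Sum>z\<in>Z n. real (e n z) * Re (LP F (sgn z))) = Re (complex_of_real (1 / D n) * (\<Sum>z\<in>Z n. of_nat (e n z) * LP F (sgn z)))"
      by (simp add: Re_sum)
    thus ?thesis by (simp only: avgC)
  qed
  have LPlim: "(\<lambda>n. sum_list (map (\<lambda>(c,k). c * B n k) F)) \<longlonglongrightarrow> c0 F" for F
  proof (induction F)
    case Nil thus ?case by (simp add: c0_def)
  next
    case (Cons x F)
    obtain c k where x: "x = (c,k)" by (cases x)
    have "(\<lambda>n. c * B n k) \<longlonglongrightarrow> c * (if k = 0 then 1 else 0)" by (intro tendsto_mult_left Blim)
    note tl = tendsto_add[OF this Cons.IH]
    have e1: "c0 ((c,k)#F) = c * (if k = 0 then 1 else 0) + c0 F" by (simp add: c0_def)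
    have e2: "(\<lambda>n. sum_list (map (\<lambda>(c,k). c * B n k) ((c,k)#F))) = (\<lambda>n. c * B n k + sum_list (map (\<lambda>(c,k). c * B n k) F))" by simp
    show ?case unfolding x e1 e2 by (rule tl)
  qed
  have contfc: "continuous_on {0..2*pi} (\<lambda>t. f (cis t))"
    by (rule continuous_on_compose2[OF cf]) (auto intro!: continuous_intros)
  show ?thesis
  proof (rule LIMSEQ_I)
    fix r :: real assume r: "r > 0"
    define \<epsilon> where "\<epsilon> = r / 5"
    have \<epsilon>: "\<epsilon> > 0" using r by (simp add: \<epsilon>_def)
    obtain g where pg: "polynomial_function g" and fg: "\<forall>x\<in>sphere 0 1. norm (f x - g x) < \<epsilon>"
      using Stone_Weierstrass_polynomial_function[OF compact_sphere cf \<epsilon>] by blast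
    obtain F where gF: "\<forall>z. norm z = 1 \<longrightarrow> g z = Re (LP F z)"
      using real_poly_LP pg real_polynomial_function_eq by blast
    have contg: "continuous_on {0..2*pi} (\<lambda>t. g (cis t))"
      by (rule continuous_on_compose2[OF continuous_on_polymonial_function[OF pg]]) (auto intro!: continuous_intros)
    have "((Re \<circ> (\<lambda>t. LP F (cis t))) has_integral Re (complex_of_real (2*pi) * c0 F)) {0..2*pi}"
      by (rule has_integral_linear[OF LP_integral bounded_linear_Re])
    moreover have "(Re \<circ> (\<lambda>t. LP F (cis t))) = (\<lambda>t. g (cis t))" using gF by (auto simp: fun_eq_iff)
    ultimately have ig: "integral {0..2*pi} (\<lambda>t. g (cis t)) = 2 * pi * Re (c0 F)" by (simp add: integral_unique)
    have "norm (integral {0..2*pi} (\<lambda>t. f (cis t) - g (cis t))) \<le> \<epsilon> * (2*pi - 0)"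
    proof (rule integral_bound)
      show "continuous_on {0..2*pi} (\<lambda>t. f (cis t) - g (cis t))" using contfc contg by (intro continuous_intros)
      fix t assume "t \<in> {0..2*pi}"
      show "norm (f (cis t) - g (cis t)) \<le> \<epsilon>" using fg by (intro less_imp_le) simp
    qed simp
    moreover have "integral {0..2*pi} (\<lambda>t. f (cis t) - g (cis t)) = integral {0..2*pi} (\<lambda>t. f (cis t)) - integral {0..2*pi} (\<lambda>t. g (cis t))"
      by (rule integral_diff) (use contfc contg integrable_continuous_real in auto)
    ultimately have "\<bar>integral {0..2*pi} (\<lambda>t. f (cis t)) - 2 * pi * Re (c0 F)\<bar> \<le> \<epsilon> * (2 * pi)" using ig by simp
    hence Idiff: "\<bar>(1/(2*pi)) * integral {0..2*pi} (\<lambda>t. f (cis t)) - Re (c0 F)\<bar> \<le> \<epsilon>"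
      by (simp add: field_simps abs_divide)
    have Ag: "(\<lambda>n. (1 / D n) * (\<Sum>z\<in>Z n. real (e n z) * g (sgn z))) \<longlonglongrightarrow> Re (c0 F)"
    proof -
      have "(1 / D n) * (\<Sum>z\<in>Z n. real (e n z) * g (sgn z)) = Re (sum_list (map (\<lambda>(c,k). c * B n k) F))" for n
      proof -
        have "(\<Sum>z\<in>Z n. real (e n z) * g (sgn z)) = (\<Sum>z\<in>Z n. real (e n z) * Re (LP F (sgn z)))"
          using gF sg1 by (intro sum.cong refl) auto
        thus ?thesis by (simp only: avgR)
      qed
      thus ?thesis using tendsto_Re[OF LPlim[of F]] by simp
    qed
    obtain N1 where N1: "\<forall>n\<ge>N1. norm ((1 / D n) * (\<Sum>z\<in>Z n. real (e n z) * g (sgn z)) - Re (c0 F)) < \<epsilon>"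
      using LIMSEQ_D[OF Ag \<epsilon>] by blast
    obtain N2 where N2: "\<forall>n\<ge>N2. norm ((1 / D n) * (\<Sum>z\<in>Z n. real (e n z)) - 1) < 1"
      using LIMSEQ_D[OF H0, of 1] by auto
    show "\<exists>no. \<forall>n\<ge>no. norm ((1 / D n) * (\<Sum>z\<in>Z n. real (e n z) * f (sgn z)) - (1/(2*pi)) * integral {0..2*pi} (\<lambda>t. f (cis t))) < r"
    proof (intro exI allI impI)
      fix n assume n: "n \<ge> max N1 N2"
      define W where "W = (1 / D n) * (\<Sum>z\<in>Z n. real (e n z))"
      have W2: "W < 2" using N2 n by (auto simp: W_def)
      have diff: "\<bar>(1 / D n) * (\<Sum>z\<in>Z n. real (e n z) * f (sgn z)) - (1 / D n) * (\<Sum>z\<in>Z n. real (e n z) * g (sgn z))\<bar> \<le> \<epsilon> * W"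
      proof -
        have "\<bar>(\<Sum>z\<in>Z n. real (e n z) * f (sgn z)) - (\<Sum>z\<in>Z n. real (e n z) * g (sgn z))\<bar>
            = \<bar>\<Sum>z\<in>Z n. real (e n z) * (f (sgn z) - g (sgn z))\<bar>" by (simp add: sum_subtractf algebra_simps)
        also have "\<dots> \<le> (\<Sum>z\<in>Z n. \<bar>real (e n z) * (f (sgn z) - g (sgn z))\<bar>)" by (rule sum_abs)
        also have "\<dots> \<le> (\<Sum>z\<in>Z n. real (e n z) * \<epsilon>)"
        proof (rule sum_mono)
          fix z assume z: "z \<in> Z n"
          have "\<bar>f (sgn z) - g (sgn z)\<bar> \<le> \<epsilon>" using fg sg1[OF z] by (intro less_imp_le) auto
          thus "\<bar>real (e n z) * (f (sgn z) - g (sgn z))\<bar> \<le> real (e n z) * \<epsilon>" by (simp add: abs_mult mult_left_mono)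
        qed
        finally have "\<bar>(\<Sum>z\<in>Z n. real (e n z) * f (sgn z)) - (\<Sum>z\<in>Z n. real (e n z) * g (sgn z))\<bar> \<le> \<epsilon> * (\<Sum>z\<in>Z n. real (e n z))"
          by (simp add: sum_distrib_left mult.commute)
        hence "(1 / D n) * \<bar>(\<Sum>z\<in>Z n. real (e n z) * f (sgn z)) - (\<Sum>z\<in>Z n. real (e n z) * g (sgn z))\<bar> \<le> (1 / D n) * (\<epsilon> * (\<Sum>z\<in>Z n. real (e n z)))"
          by (rule mult_left_mono) (use Dnn[of n] in simp)
        moreover have "\<bar>(1 / D n) * (\<Sum>z\<in>Z n. real (e n z) * f (sgn z)) - (1 / D n) * (\<Sum>z\<in>Z n. real (e n z) * g (sgn z))\<bar>
           = (1 / D n) * \<bar>(\<Sum>z\<in>Z n. real (e n z) * f (sgn z)) - (\<Sum>z\<in>Z n. real (e n z) * g (sgn z))\<bar>"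
          using Dnn[of n] by (simp only: right_diff_distrib[symmetric] abs_mult) simp
        ultimately show ?thesis by (simp add: W_def mult_ac)
      qed
      have "\<epsilon> * W \<le> \<epsilon> * 2" using W2 \<epsilon> by simp
      have g1: "\<bar>(1 / D n) * (\<Sum>z\<in>Z n. real (e n z) * g (sgn z)) - Re (c0 F)\<bar> < \<epsilon>" using N1 n by auto
      show "norm ((1 / D n) * (\<Sum>z\<in>Z n. real (e n z) * f (sgn z)) - (1/(2*pi)) * integral {0..2*pi} (\<lambda>t. f (cis t))) < r"
      proof -
        have r5: "r = 5 * \<epsilon>" by (simp add: \<epsilon>_def)
        show ?thesis unfolding real_norm_def using diff g1 Idiff \<open>\<epsilon> * W \<le> \<epsilon> * 2\<close> r5
          by (simp only: abs_le_iff abs_less_iff) linarith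
      qed
    qed
  qed
qed

lemma coeff_Fpoly: "coeff (Fpoly n) j = (if 1 \<le> j \<and> j \<le> n then of_nat (part_count j n) else 0)"
  by (auto simp: Fpoly_def coeff_sum coeff_monom)

lemma degree_Fpoly: "degree (Fpoly n) = n"
proof (cases "n = 0")
  case True thus ?thesis by (simp add: Fpoly_def)
next
  case False
  have "coeff (Fpoly n) n = 1" using False by (simp add: coeff_Fpoly part_count_n)
  hence "n \<le> degree (Fpoly n)" by (intro le_degree) simp
  moreover have "degree (Fpoly n) \<le> n" by (rule degree_le) (simp add: coeff_Fpoly)
  ultimately show ?thesis by simp
qed

lemma Fpoly_nz: "n \<ge> 1 \<Longrightarrow> Fpoly n \<noteq> 0"
  using degree_Fpoly[of n] coeff_Fpoly[of n n] part_count_n[of n] by auto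

lemma lead_Fpoly: "n \<ge> 1 \<Longrightarrow> lead_coeff (Fpoly n) = 1"
  by (simp add: degree_Fpoly coeff_Fpoly part_count_n)

lemma Fpoly_bound: "norm x = 1 \<Longrightarrow> norm (poly (Fpoly n) x) \<le> Kn n"
proof -
  assume x: "norm x = 1"
  have "norm (poly (Fpoly n) x) = norm (\<Sum>k=1..n. of_nat (part_count k n) * x ^ k)"
    by (simp add: Fpoly_def poly_sum poly_monom)
  also have "\<dots> \<le> (\<Sum>k=1..n. norm (of_nat (part_count k n) * x ^ k))" by (rule norm_sum)
  also have "\<dots> = (\<Sum>k=1..n. real (part_count k n))" using x by (simp add: norm_mult norm_power)
  also have "\<dots> \<le> (\<Sum>k=1..n. real (card (parts n)))" by (rule sum_mono) (simp add: part_count_le)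
  also have "\<dots> = Kn n" by (simp add: Kn_def)
  finally show ?thesis .
qed

lemma coeff1_x2: "coeff ([:0,1:] ^ Suc (Suc j) * q) 1 = (0 :: complex)"
  by (simp add: mult.assoc)

lemma Fpoly_decomp:
  assumes n: "n \<ge> 1"
  defines "Z \<equiv> {z. poly (Fpoly n) z = 0 \<and> z \<noteq> 0}"
  shows "finite Z" "0 \<notin> Z"
    "\<And>x. poly (Fpoly n) x = x * (\<Prod>z\<in>Z. (x - z) ^ order z (Fpoly n))"
    "(\<Prod>z\<in>Z. norm z ^ order z (Fpoly n)) = 1"
    "(\<Sum>z\<in>Z. order z (Fpoly n)) = n - 1"
proof -
  define P where "P = Fpoly n"
  have P0: "P \<noteq> 0" using Fpoly_nz[OF n] by (simp add: P_def)
  have R: "{z. poly P z = 0} = insert 0 Z"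
  proof -
    have "poly P 0 = 0" by (simp add: P_def poly_0_coeff_0 coeff_Fpoly)
    thus ?thesis by (auto simp: Z_def P_def)
  qed
  have fR: "finite {z. poly P z = 0}" using P0 by (rule poly_roots_finite)
  show fZ: "finite Z" using fR R by simp
  show z0: "0 \<notin> Z" by (simp add: Z_def)
  define Hp where "Hp = (\<Prod>z\<in>Z. [:-z, 1:] ^ order z P)"
  define ord0 where "ord0 = order 0 P"
  have "P = smult (lead_coeff P) (\<Prod>z|poly P z = 0. [:-z, 1:] ^ order z P)"
    by (rule complex_poly_decompose[symmetric])
  also have "(\<Prod>z|poly P z = 0. [:-z, 1:] ^ order z P) = (\<Prod>z\<in>insert 0 Z. [:-z, 1:] ^ order z P)"
    by (simp only: R)
  also have "\<dots> = [:-0, 1:] ^ order 0 P * Hp" unfolding Hp_def by (rule prod.insert[OF fZ z0])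
  also have "lead_coeff P = 1" using lead_Fpoly[OF n] by (simp add: P_def)
  also have "smult 1 ([:-0, 1:] ^ order 0 P * Hp) = [:0,1:] ^ ord0 * Hp" by (simp add: ord0_def)
  finally have Pd: "P = [:0,1:] ^ ord0 * Hp" .
  have o1: "ord0 \<ge> 1" using R P0 order_root[of P 0] by (auto simp: ord0_def)
  have c1: "coeff P 1 = 1" using n part_count_1[OF n] by (simp add: P_def coeff_Fpoly)
  have "ord0 = 1"
  proof (rule ccontr)
    assume "ord0 \<noteq> 1"
    define j where "j = ord0 - 2"
    have "ord0 = Suc (Suc j)" using o1 \<open>ord0 \<noteq> 1\<close> by (simp add: j_def)
    hence "coeff P 1 = 0" by (simp add: Pd coeff1_x2)
    thus False using c1 by simp
  qed
  hence Pd1: "P = [:0,1:] * Hp" using Pd by simp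
  have pH: "poly Hp x = (\<Prod>z\<in>Z. (x - z) ^ order z P)" for x
    unfolding Hp_def by (simp add: poly_prod)
  have "poly P x = x * (\<Prod>z\<in>Z. (x - z) ^ order z P)" for x
    by (subst Pd1) (simp add: pH)
  thus "poly (Fpoly n) x = x * (\<Prod>z\<in>Z. (x - z) ^ order z (Fpoly n))" for x
    by (simp add: P_def)
  have "coeff P 1 = coeff Hp 0" by (simp add: Pd1)
  also have "coeff Hp 0 = (\<Prod>z\<in>Z. (- z) ^ order z P)" using pH[of 0] by (simp add: poly_0_coeff_0)
  finally have "(\<Prod>z\<in>Z. (- z) ^ order z P) = 1" using c1 by simp
  hence "norm (\<Prod>z\<in>Z. (- z) ^ order z P) = 1" by simp
  thus "(\<Prod>z\<in>Z. norm z ^ order z (Fpoly n)) = 1" by (simp add: prod_norm[symmetric] norm_power P_def)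
  have Hp0: "Hp \<noteq> 0" using Pd1 P0 by auto
  have "degree P = 1 + degree Hp" using Hp0 by (simp add: Pd1 degree_mult_eq)
  moreover have "degree Hp = (\<Sum>z\<in>Z. order z P)" unfolding Hp_def
    by (subst degree_prod_sum_eq) (auto simp: degree_power_eq)
  moreover have "degree P = n" by (simp add: P_def degree_Fpoly)
  ultimately show "(\<Sum>z\<in>Z. order z (Fpoly n)) = n - 1" by (simp add: P_def)
qed

theorem mainTheorem3:
  fixes f :: "complex \<Rightarrow> real"
  assumes "continuous_on (sphere 0 1) f"
  shows "(\<lambda>n. zero_arg_avg (Fpoly n) f)
           \<longlonglongrightarrow> (1 / (2 * pi)) * integral {0..2*pi} (\<lambda>t. f (cis t))"
proof -
  define Z where "Z n = {z. poly (Fpoly n) z = 0 \<and> z \<noteq> 0}" for n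
  define e where "e n z = order z (Fpoly n)" for n z
  define D where "D n = real n" for n
  have eq: "zero_arg_avg (Fpoly n) f = (1 / D n) * (\<Sum>z\<in>Z n. real (e n z) * f (sgn z))" for n
    unfolding zero_arg_avg_def Z_def e_def D_def degree_Fpoly
    by (intro arg_cong2[where f="(*)"] refl sum.cong) (auto simp: cis_Arg)
  have "(\<lambda>n. (1 / D n) * (\<Sum>z\<in>Z n. real (e n z) * f (sgn z))) \<longlonglongrightarrow> (1 / (2 * pi)) * integral {0..2*pi} (\<lambda>t. f (cis t))"
  proof (rule weyl)
    show "\<And>n. 0 \<notin> Z n" by (simp add: Z_def)
    show "\<And>n. D n \<ge> 0" by (simp add: D_def)
    show "continuous_on (sphere 0 1) f" by fact
    have ev1: "eventually (\<lambda>n. (1 / D n) * (\<Sum>z\<in>Z n. real (e n z)) = 1 - 1 / real n) sequentially"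
      using eventually_ge_at_top[of 1]
    proof eventually_elim
      case (elim n)
      have "(\<Sum>z\<in>Z n. real (e n z)) = real (n - 1)"
        using Fpoly_decomp(5)[OF elim] unfolding Z_def e_def by (metis of_nat_sum)
      thus ?case using elim by (simp add: D_def of_nat_diff field_simps)
    qed
    have "(\<lambda>n. 1 - 1 / real n) \<longlonglongrightarrow> 1 - 0"
      by (intro tendsto_intros lim_inverse_n') 
    hence "(\<lambda>n. 1 - 1 / real n) \<longlonglongrightarrow> 1" by simp
    thus "(\<lambda>n. (1 / D n) * (\<Sum>z\<in>Z n. real (e n z))) \<longlonglongrightarrow> 1"
      using ev1 by (rule Lim_transform_eventually[OF _ eventually_mono[OF _ sym]]) auto
    fix m :: nat assume m: "m \<ge> 1"
    have bnd: "eventually (\<lambda>n. norm (complex_of_real (1 / D n) * (\<Sum>z\<in>Z n. of_nat (e n z) * sgn z ^ m)) \<le> (4 * m * ln (Kn n) + 2) / real n) sequentially"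
      using eventually_ge_at_top[of 1]
    proof eventually_elim
      case (elim n)
      note dec = Fpoly_decomp[OF elim]
      have cb: "norm (\<Sum>z\<in>Z n. of_nat (e n z) * sgn z ^ m) \<le> 4 * m * ln (Kn n) + 2"
        unfolding Z_def e_def
      proof (rule core_bound[OF dec(1,2) Kn_ge1[OF elim] _ dec(4) m])
        fix x :: complex assume x: "norm x = 1"
        have "norm (poly (Fpoly n) x) = norm x * norm (\<Prod>z\<in>{z. poly (Fpoly n) z = 0 \<and> z \<noteq> 0}. (x - z) ^ order z (Fpoly n))"
          by (simp only: dec(3)[of x] norm_mult)
        hence "norm (\<Prod>z\<in>{z. poly (Fpoly n) z = 0 \<and> z \<noteq> 0}. (x - z) ^ order z (Fpoly n)) = norm (poly (Fpoly n) x)"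
          using x by simp
        also have "\<dots> \<le> Kn n" by (rule Fpoly_bound[OF x])
        finally show "norm (\<Prod>z\<in>{z. poly (Fpoly n) z = 0 \<and> z \<noteq> 0}. (x - z) ^ order z (Fpoly n)) \<le> Kn n" .
      qed
      have "norm (complex_of_real (1 / D n) * (\<Sum>z\<in>Z n. of_nat (e n z) * sgn z ^ m)) = (1 / real n) * norm (\<Sum>z\<in>Z n. of_nat (e n z) * sgn z ^ m)"
        by (simp only: D_def norm_mult norm_of_real abs_divide abs_1 of_nat_0_le_iff abs_of_nonneg)
      also have "\<dots> \<le> (1 / real n) * (4 * m * ln (Kn n) + 2)" by (rule mult_left_mono[OF cb]) simp
      finally show ?case by simp
    qed
    have "(\<lambda>n. (4 * real m) * (ln (Kn n) / real n) + 2 * (1 / real n)) \<longlonglongrightarrow> (4 * real m) * 0 + 2 * (0::real)"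
      by (intro tendsto_intros ln_Kn_lim lim_inverse_n')
    hence "(\<lambda>n. (4 * m * ln (Kn n) + 2) / real n) \<longlonglongrightarrow> 0" by (simp add: add_divide_distrib)
    thus "(\<lambda>n. complex_of_real (1 / D n) * (\<Sum>z\<in>Z n. of_nat (e n z) * sgn z ^ m)) \<longlonglongrightarrow> 0"
      by (rule Lim_null_comparison[OF bnd])
  qed
  thus ?thesis by (simp only: eq)
qed

end
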